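(* Let $k\leq n/2$. Then the language $B^*_{n,k}=\{w \in \{0,1\}^* : |w|_1\geq k,\ |w|_0 \geq n-k\}$ requires regular expressions of length at least $\mathrm{rpn}(B^*_{n,k}) \geq nk^{\Omega( \log k)}$.
   Context: $|w|_a$ is the number of occurrences of letter $a$ in $w$. Regular expressions are built from $\epsilon$ and letters by union, concatenation and star (no $\emptyset$); $\mathrm{rpn}(L)$ is the minimum number of syntax-tree nodes of an expression describing $L$. Logarithms are base 2. *)

theory Defs
  imports Complex_Main
begin

datatype 'a rexp = Eps | Lit 'a | Plus "'a rexp" "'a rexp" | Times "'a rexp" "'a rexp" | Star "'a rexp"

definition conc :: "'a list set \<Rightarrow> 'a list set \<Rightarrow> 'a list set" where
  "conc A B = {u @ v | u v. u \<in> A \<and> v \<in> B}"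

definition kleene :: "'a list set \<Rightarrow> 'a list set" where
  "kleene A = {concat ws | ws. set ws \<subseteq> A}"

fun lang :: "'a rexp \<Rightarrow> 'a list set" where
  "lang Eps = {[]}"
| "lang (Lit a) = {[a]}"
| "lang (Plus r s) = lang r \<union> lang s"
| "lang (Times r s) = conc (lang r) (lang s)"
| "lang (Star r) = kleene (lang r)"

fun rsize :: "'a rexp \<Rightarrow> nat" where
  "rsize Eps = 1"
| "rsize (Lit a) = 1"
| "rsize (Plus r s) = rsize r + rsize s + 1"
| "rsize (Times r s) = rsize r + rsize s + 1"
| "rsize (Star r) = rsize r + 1"

definition rpn :: "'a list set \<Rightarrow> nat" where
  "rpn L = (LEAST m. \<exists>r. lang r = L \<and> rsize r = m)"

definition occ :: "'a list \<Rightarrow> 'a \<Rightarrow> nat" where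
  "occ w a = length (filter (\<lambda>x. x = a) w)"

text \<open>Binary alphabet: letter 1 is True, letter 0 is False.\<close>
definition Bstar :: "nat \<Rightarrow> nat \<Rightarrow> bool list set" where
  "Bstar n k = {w. occ w True \<ge> k \<and> occ w False \<ge> n - k}"

end

theory Submission
  imports Defs
begin

lemma cb_step: "(Suc j) * ((2*Suc j) choose Suc j) = 2*(2*j+1) * ((2*j) choose j)"
  by (metis Suc_eq_plus1 Suc_times_binomial Suc_times_binomial_add
    add_2_eq_Suc add_mult_distrib mult_Suc_right nat_mult_1 one_add_one)

lemma cb_even: "((2*j) choose j)^2 * (3*j+1) \<le> 16^j"
proof (induction j)
  case 0 then show ?case by simp
next
  case (Suc j)
  define X where "X = (2*j) choose j"
  define Y where "Y = (2*Suc j) choose Suc j"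
  have e: "Suc j * Y = 2*(2*j+1)*X" using cb_step unfolding X_def Y_def by simp
  have IH: "X^2*(3*j+1) \<le> 16^j" using Suc X_def by simp
  have poly: "(2*j+1)^2*(3*j+4) \<le> 4*(j+1)^2*(3*j+1)"
    by (simp add: power2_eq_square algebra_simps)
  have "(Suc j)^2 * (Y^2 * (3*Suc j+1)) = (Suc j * Y)^2 * (3*j+4)"
    by (simp add: power2_eq_square algebra_simps)
  also have "\<dots> = (2*(2*j+1)*X)^2 * (3*j+4)" by (simp only: e)
  also have "\<dots> = 4 * X^2 * ((2*j+1)^2*(3*j+4))" by (simp add: power2_eq_square algebra_simps)
  also have "\<dots> \<le> 4 * X^2 * (4*(j+1)^2*(3*j+1))" using poly by (intro mult_le_mono2)
  also have "\<dots> = 16 * (j+1)^2 * (X^2*(3*j+1))" by (simp add: algebra_simps)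
  also have "\<dots> \<le> 16 * (j+1)^2 * 16^j" using IH by (intro mult_le_mono2)
  also have "\<dots> = (Suc j)^2 * 16^(Suc j)" by simp
  finally have "(Suc j)^2 * (Y^2 * (3*Suc j+1)) \<le> (Suc j)^2 * 16^(Suc j)" .
  then have "Y^2 * (3*Suc j+1) \<le> 16^(Suc j)" by (simp del: power_Suc)
  then show ?case unfolding Y_def .
qed

definition mb :: "nat \<Rightarrow> nat" where "mb d = d choose (d div 2)"

lemma mb_ge: "d choose e \<le> mb d" unfolding mb_def by (rule binomial_maximum)

lemma mb_le_pow2: "mb d \<le> 2^d" unfolding mb_def by (rule binomial_le_pow2)

lemma mb_0[simp]: "mb 0 = 1" by (simp add: mb_def)

lemma mb_super: "mb a * mb b \<le> mb (a+b)"
proof -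
  let ?i = "a div 2" and ?j = "b div 2"
  have "(a choose ?i) * (b choose (?i + ?j - ?i)) \<le> (\<Sum>k\<le>?i+?j. (a choose k) * (b choose (?i+?j - k)))"
    by (rule member_le_sum) auto
  also have "\<dots> = (a+b) choose (?i+?j)" by (rule vandermonde)
  also have "\<dots> \<le> mb (a+b)" by (rule mb_ge)
  finally show ?thesis unfolding mb_def by simp
qed

lemma mb_sq: "mb d ^ 2 * d \<le> 4^d"
proof (cases "even d")
  case True
  then obtain j where d: "d = 2*j" by blast
  have "mb d = (2*j) choose j" by (simp add: mb_def d)
  then have "mb d ^2 * d \<le> ((2*j) choose j)^2 * (3*j+1)" by (simp add: d)
  also have "\<dots> \<le> 16^j" by (rule cb_even)
  also have "\<dots> = 4^d" by (simp add: d power_mult)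
  finally show ?thesis .
next
  case False
  then obtain j where d: "d = 2*j+1" by (metis oddE)
  have m: "mb d \<le> 2 * ((2*j) choose j)"
  proof (cases j)
    case 0 then show ?thesis by (simp add: mb_def d)
  next
    case (Suc i)
    have "mb d = (2*j+1) choose j" by (simp add: mb_def d)
    also have "\<dots> = ((2*j) choose j) + ((2*j) choose i)"
      by (simp add: Suc)
    also have "\<dots> \<le> 2 * ((2*j) choose j)"
      using binomial_maximum'[of j i] by simp
    finally show ?thesis .
  qed
  have "mb d ^2 \<le> (2 * ((2*j) choose j))^2" using m by (rule power_mono) simp
  then have "mb d ^2 * d \<le> (2 * ((2*j) choose j))^2 * (2*j+1)"
    unfolding d by (rule mult_le_mono1)
  also have "\<dots> = 4 * (((2*j) choose j)^2 * (2*j+1))" by (simp add: power2_eq_square)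
  also have "\<dots> \<le> 4 * (((2*j) choose j)^2 * (3*j+1))" by (intro mult_le_mono2) simp
  also have "\<dots> \<le> 4 * 16^j" using cb_even by (intro mult_le_mono2)
  also have "\<dots> = 4^d" by (simp add: d power_mult power_add)
  finally show ?thesis .
qed


fun cok :: "nat \<Rightarrow> nat list \<Rightarrow> bool" where
  "cok x0 [] = (x0 \<le> 1)"
| "cok x0 (x#xs) = (x \<le> x0 \<and> x0 \<le> 2*x \<and> cok x xs)"

fun pm :: "nat \<Rightarrow> nat list \<Rightarrow> nat" where
  "pm x0 [] = 1"
| "pm x0 (x#xs) = mb (x0 - x) * pm x xs"

lemma pow4: "((2::nat)^s)^2 = 4^s"
proof -
  have "((2::nat)^s)^2 = (2^2)^s" by (metis power_mult mult.commute)
  then show ?thesis by simp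
qed

lemma le8: "(X::nat) \<le> 8^m*X"
proof -
  have "1 \<le> (8::nat)^m" by simp
  then show ?thesis using mult_le_mono1[of 1 "8^m" X] by simp
qed

lemma pm_le: "cok x0 xs \<Longrightarrow> pm x0 xs \<le> 2^x0"
proof (induction xs arbitrary: x0)
  case Nil then show ?case by simp
next
  case (Cons x xs)
  then have "x \<le> x0" "pm x xs \<le> 2^x" by auto
  then have "mb (x0 - x) * pm x xs \<le> 2^(x0-x) * 2^x" by (intro mult_le_mono mb_le_pow2)
  also have "\<dots> = 2^x0" using \<open>x \<le> x0\<close> by (simp flip: power_add)
  finally show ?case by simp
qed

lemma seg:
  "cok x0 xs \<Longrightarrow> x0 \<le> s \<Longrightarrow> 8 \<le> X \<Longrightarrow> (0 < m \<Longrightarrow> 8^m*X \<le> s \<and> s < 4*x0) \<Longrightarrow>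
   (mb (s - x0) * pm x0 xs)^2 * X^m \<le> 4^s"
proof (induction xs arbitrary: x0 m s)
  case Nil
  show ?case
  proof (cases m)
    case 0
    have "mb (s - x0) \<le> 2^(s-x0)" by (rule mb_le_pow2)
    also have "\<dots> \<le> 2^s" by simp
    finally have "(mb (s - x0))^2 \<le> (2^s)^2" by (rule power_mono) simp
    then show ?thesis using 0 by (simp only: pow4) simp
  next
    case (Suc m')
    then have "8^m*X \<le> s" "s < 4*x0" using Nil by auto
    moreover have "X \<le> 8^m*X" by (rule le8)
    moreover note Nil(3)
    moreover have "x0 \<le> 1" using Nil by simp
    ultimately show ?thesis by linarith
  qed
next
  case (Cons x xs)
  from Cons.prems have xx0: "x \<le> x0" "x0 \<le> 2*x" and cx: "cok x xs" by auto
  have sup: "mb (s - x0) * mb (x0 - x) \<le> mb (s - x)"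
    using mb_super[of "s-x0" "x0-x"] xx0 Cons.prems(2) by simp
  show ?case
  proof (cases m)
    case 0
    have "mb (s - x0) * pm x0 (x#xs) = (mb (s - x0) * mb (x0 - x)) * pm x xs" by simp
    also have "\<dots> \<le> 2^(s-x) * 2^x" using sup mb_le_pow2 pm_le[OF cx]
      by (meson le_trans mult_le_mono)
    also have "\<dots> = 2^s" using xx0 Cons.prems(2) by (simp flip: power_add)
    finally have "(mb (s - x0) * pm x0 (x#xs))^2 \<le> (2^s)^2" by (rule power_mono) simp
    then show ?thesis using 0 by (simp only: pow4) simp
  next
    case (Suc m')
    then have sX: "8^m*X \<le> s" and s4: "s < 4*x0" using Cons.prems by auto
    show ?thesis
    proof (cases "s < 4*x")
      case True
      have "(mb (s - x) * pm x xs)^2 * X^m \<le> 4^s"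
        using Cons.IH[OF cx _ Cons.prems(3), of s m] True sX xx0 Cons.prems(2) by auto
      moreover have "mb (s - x0) * pm x0 (x#xs) \<le> mb (s - x) * pm x xs"
        using sup by simp
      ultimately show ?thesis
        by (meson le_trans mult_le_mono1 power_mono zero_le)
    next
      case False
      have X8: "8^m*X = 8 * (8^m'*X)" using Suc by simp
      have "8*x \<ge> s" using xx0 s4 by linarith
      then have xb: "8^m'*X \<le> x" using sX X8 by linarith
      have "X \<le> 8^m'*X" by (rule le8)
      then have "X \<le> s - x" using False sX X8 by linarith
      have IH: "(mb (x - x) * pm x xs)^2 * X^m' \<le> 4^x"
      proof -
        have "X \<le> 8^m'*X" by (rule le8)
        then have "0 < x" using xb Cons.prems(3) by linarith
        then show ?thesis using Cons.IH[OF cx _ Cons.prems(3), of x m'] xb by auto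
      qed
      have A: "(mb (s-x))^2 * X \<le> 4^(s-x)"
        using mb_sq[of "s-x"] \<open>X \<le> s - x\<close> by (meson le_trans mult_le_mono2)
      have "(mb (s - x0) * pm x0 (x#xs))^2 * X^m \<le> (mb (s - x) * pm x xs)^2 * X^m"
        using sup by (intro mult_le_mono1 power_mono) auto
      also have "\<dots> = ((mb (s-x))^2 * X) * ((pm x xs)^2 * X^m')"
        using Suc by (simp add: power2_eq_square algebra_simps)
      also have "\<dots> \<le> 4^(s-x) * 4^x" using A IH by (intro mult_le_mono) auto
      also have "\<dots> = 4^s" using xx0 Cons.prems(2) by (simp flip: power_add)
      finally show ?thesis .
    qed
  qed
qed


definition least :: "bool list set \<Rightarrow> bool list \<Rightarrow> bool" where
  "least L w \<longleftrightarrow> w \<in> L \<and> (\<forall>v\<in>L. occ w True \<le> occ v True \<and> occ w False \<le> occ v False)"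

lemma occ_append[simp]: "occ (u@v) a = occ u a + occ v a"
  by (simp add: occ_def)

lemma occ_Nil[simp]: "occ [] a = 0" by (simp add: occ_def)
lemma occ_Cons[simp]: "occ (x#xs) a = (if x = a then Suc (occ xs a) else occ xs a)" by (simp add: occ_def)

lemma len_occ: "length (w::bool list) = occ w True + occ w False"
  by (induction w) auto

lemma least_times: assumes h: "least (lang (Times r s)) w"
  shows "\<exists>u v. w = u@v \<and> least (lang r) u \<and> least (lang s) v"
proof -
  from h obtain u v where w: "w = u@v" and u: "u \<in> lang r" and v: "v \<in> lang s"
    by (auto simp: least_def conc_def)
  have "least (lang r) u"
    unfolding least_def
  proof (rule conjI[OF u], rule ballI)
    fix u' assume "u' \<in> lang r"
    then have "u'@v \<in> lang (Times r s)" using v by (auto simp: conc_def)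
    then show "occ u True \<le> occ u' True \<and> occ u False \<le> occ u' False"
      using h w unfolding least_def by fastforce
  qed
  moreover have "least (lang s) v"
    unfolding least_def
  proof (rule conjI[OF v], rule ballI)
    fix v' assume "v' \<in> lang s"
    then have "u@v' \<in> lang (Times r s)" using u by (auto simp: conc_def)
    then show "occ v True \<le> occ v' True \<and> occ v False \<le> occ v' False"
      using h w unfolding least_def by fastforce
  qed
  ultimately show ?thesis using w by blast
qed

lemma least_star: "least (lang (Star r)) w \<Longrightarrow> w = []"
proof -
  assume h: "least (lang (Star r)) w"
  have "[] \<in> lang (Star r)" by (auto simp: kleene_def intro: exI[of _ "[]"])
  then have "occ w True = 0" "occ w False = 0" using h unfolding least_def by fastforce+
  then show ?thesis using len_occ[of w] by simp
qed

lemma least_plus: "least (lang (Plus r s)) w \<Longrightarrow> least (lang r) w \<or> least (lang s) w"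
  unfolding least_def by auto

lemma least_same: "least L u \<Longrightarrow> least L v \<Longrightarrow> occ u a = occ v a"
proof -
  assume "least L u" "least L v"
  then have "occ u True = occ v True \<and> occ u False = occ v False"
    unfolding least_def by (meson le_antisym)
  then show ?thesis by (cases a) auto
qed

definition lw :: "bool rexp \<Rightarrow> bool list" where "lw r = (SOME w. least (lang r) w)"
definition len :: "bool rexp \<Rightarrow> nat" where "len r = length (lw r)"
definition cnt :: "bool rexp \<Rightarrow> nat" where "cnt r = occ (lw r) True"

lemma len_cnt: "least (lang r) w \<Longrightarrow> len r = length w \<and> cnt r = occ w True"
proof -
  assume h: "least (lang r) w"
  then have l: "least (lang r) (lw r)" unfolding lw_def by (rule someI)
  have "occ (lw r) True = occ w True" "occ (lw r) False = occ w False"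
    using least_same[OF l h] by auto
  then show ?thesis unfolding len_def cnt_def using len_occ[of w] len_occ[of "lw r"] by simp
qed

definition shiftset :: "nat \<Rightarrow> nat set \<Rightarrow> nat set" where
  "shiftset l B = (\<lambda>i. i - l) ` (B \<inter> {l..})"

definition shift :: "nat \<Rightarrow> (nat \<times> nat \<times> nat) list \<Rightarrow> (nat \<times> nat \<times> nat) list" where
  "shift l \<tau> = map (\<lambda>(a,b,c). (a+l,b,c)) \<tau>"

fun types :: "bool rexp \<Rightarrow> nat set \<Rightarrow> (nat \<times> nat \<times> nat) list set" where
  "types Eps B = {}"
| "types (Lit a) B = (if 0 \<in> B then {[]} else {})"
| "types (Plus r s) B = types r B \<union> types s B"
| "types (Times r s) B =
    (if card (B \<inter> {len r..<len r + len s}) \<le> card (B \<inter> {0..<len r})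
     then (\<lambda>\<tau>. (0, len r, cnt r) # \<tau>) ` types r B
     else (\<lambda>\<tau>. (len r, len s, cnt s) # shift (len r) \<tau>) ` types s (shiftset (len r) B))"
| "types (Star r) B = {}"

definition cB :: "nat set \<Rightarrow> nat \<Rightarrow> nat \<Rightarrow> nat" where
  "cB B a b = card (B \<inter> {a..<a+b})"

fun okc :: "nat set \<Rightarrow> nat \<Rightarrow> nat \<Rightarrow> (nat \<times> nat \<times> nat) list \<Rightarrow> bool" where
  "okc B A L [] = (cB B A L \<le> 1)"
| "okc B A L ((a,b,c)#\<tau>) = (A \<le> a \<and> a+b \<le> A+L \<and> cB B A L \<le> 2 * cB B a b \<and> okc B a b \<tau>)"

fun sat :: "bool list \<Rightarrow> (nat \<times> nat \<times> nat) list \<Rightarrow> bool" where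
  "sat w [] = True"
| "sat w ((a,b,c)#\<tau>) = (a+b \<le> length w \<and> occ (take b (drop a w)) True = c \<and> sat w \<tau>)"

lemma types_empty[simp]: "types r {} = {}"
  by (induction r) auto

lemma finite_types: "finite (types r B)"
  by (induction r arbitrary: B) auto

lemma shiftset_empty[simp]: "shiftset l {} = {}" by (simp add: shiftset_def)

lemma shiftset_disj: "A \<inter> B = {} \<Longrightarrow> shiftset l A \<inter> shiftset l B = {}"
  unfolding shiftset_def by auto (metis diff_add_inverse2 le_add_diff_inverse2 disjoint_iff)

lemma cB_shift: "cB (shiftset l B) A L = cB B (A+l) L"
proof -
  have "shiftset l B \<inter> {A..<A+L} = (\<lambda>i. i - l) ` (B \<inter> {A+l..<A+l+L})"
  proof (intro equalityI subsetI)
    fix x assume "x \<in> shiftset l B \<inter> {A..<A+L}"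
    then obtain i where i: "i \<in> B" "l \<le> i" "x = i - l" "A \<le> x" "x < A+L"
      by (auto simp: shiftset_def)
    then have "i \<in> B \<inter> {A+l..<A+l+L}" by auto
    then show "x \<in> (\<lambda>i. i - l) ` (B \<inter> {A+l..<A+l+L})" using i(3) by blast
  next
    fix x assume "x \<in> (\<lambda>i. i - l) ` (B \<inter> {A+l..<A+l+L})"
    then obtain i where i: "i \<in> B" "A+l \<le> i" "i < A+l+L" "x = i - l" by auto
    then have "x \<in> shiftset l B" unfolding shiftset_def by auto
    moreover have "x \<in> {A..<A+L}" using i by auto
    ultimately show "x \<in> shiftset l B \<inter> {A..<A+L}" by blast
  qed
  moreover have "inj_on (\<lambda>i. i - l) (B \<inter> {A+l..<A+l+L})" by (auto simp: inj_on_def)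
  ultimately show ?thesis unfolding cB_def by (simp add: card_image)
qed

lemma okc_shift: "okc (shiftset l B) A L \<tau> \<Longrightarrow> okc B (A+l) L (shift l \<tau>)"
  by (induction "shiftset l B" A L \<tau> rule: okc.induct) (auto simp: shift_def cB_shift)

lemma sat_app_r: "sat u \<tau> \<Longrightarrow> sat (u@v) \<tau>"
  by (induction u \<tau> rule: sat.induct) auto

lemma sat_shift: "sat v \<tau> \<Longrightarrow> sat (u@v) (shift (length u) \<tau>)"
  by (induction v \<tau> rule: sat.induct) (auto simp: shift_def add.commute)


lemma types_sum:
  "finite I \<Longrightarrow> (\<forall>i\<in>I. \<forall>j\<in>I. i \<noteq> j \<longrightarrow> Bf i \<inter> Bf j = {}) \<Longrightarrow>
   2 * (\<Sum>j\<in>I. card (types r (Bf j))) \<le> rsize r + 1"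
proof (induction r arbitrary: Bf)
  case Eps then show ?case by simp
next
  case (Star r) then show ?case by simp
next
  case (Lit a)
  have "(\<Sum>j\<in>I. card (types (Lit a) (Bf j))) = (\<Sum>j\<in>I. if 0 \<in> Bf j then 1 else 0)"
    by (intro sum.cong) auto
  also have "\<dots> = card {j\<in>I. 0 \<in> Bf j}"
    using Lit.prems(1) sum.inter_filter[of I "\<lambda>_. 1::nat" "\<lambda>j. 0 \<in> Bf j"] by simp
  also have "\<dots> \<le> 1"
    using card_le_Suc0_iff_eq[of "{j\<in>I. 0 \<in> Bf j}"] Lit.prems by auto
  finally show ?case by simp
next
  case (Plus r s)
  have "(\<Sum>j\<in>I. card (types (Plus r s) (Bf j))) \<le> (\<Sum>j\<in>I. card (types r (Bf j)) + card (types s (Bf j)))"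
    by (intro sum_mono) (simp add: card_Un_le)
  also have "\<dots> = (\<Sum>j\<in>I. card (types r (Bf j))) + (\<Sum>j\<in>I. card (types s (Bf j)))"
    by (simp add: sum.distrib)
  finally show ?case using Plus.IH[OF Plus.prems] Plus.IH[OF Plus.prems] by simp
next
  case (Times r s)
  define lft where "lft j = (card (Bf j \<inter> {len r..<len r + len s}) \<le> card (Bf j \<inter> {0..<len r}))" for j
  define Bl where "Bl j = (if lft j then Bf j else {})" for j
  define Bs where "Bs j = (if lft j then {} else shiftset (len r) (Bf j))" for j
  have dl: "\<forall>i\<in>I. \<forall>j\<in>I. i \<noteq> j \<longrightarrow> Bl i \<inter> Bl j = {}"
    using Times.prems(2) unfolding Bl_def by auto
  have ds: "\<forall>i\<in>I. \<forall>j\<in>I. i \<noteq> j \<longrightarrow> Bs i \<inter> Bs j = {}"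
    using Times.prems(2) shiftset_disj unfolding Bs_def by auto
  have each: "card (types (Times r s) (Bf j)) \<le> card (types r (Bl j)) + card (types s (Bs j))" for j
  proof (cases "lft j")
    case True
    then have "card (types (Times r s) (Bf j)) \<le> card (types r (Bf j))"
      using card_image_le[OF finite_types] by (simp add: lft_def)
    then show ?thesis using True by (simp add: Bl_def Bs_def)
  next
    case False
    then have "card (types (Times r s) (Bf j)) \<le> card (types s (shiftset (len r) (Bf j)))"
      using card_image_le[OF finite_types] by (simp add: lft_def)
    then show ?thesis using False by (simp add: Bl_def Bs_def)
  qed
  have "(\<Sum>j\<in>I. card (types (Times r s) (Bf j))) \<le> (\<Sum>j\<in>I. card (types r (Bl j)) + card (types s (Bs j)))"
    by (intro sum_mono each)
  also have "\<dots> = (\<Sum>j\<in>I. card (types r (Bl j))) + (\<Sum>j\<in>I. card (types s (Bs j)))"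
    by (simp add: sum.distrib)
  finally show ?case using Times.IH(1)[OF Times.prems(1) dl] Times.IH(2)[OF Times.prems(1) ds] by simp
qed


lemma card_split: "card (B \<inter> {0..<(l::nat)+m}) = card (B \<inter> {0..<l}) + card (B \<inter> {l..<l+m})"
proof -
  have "B \<inter> {0..<l+m} = (B \<inter> {0..<l}) \<union> (B \<inter> {l..<l+m})" by auto
  moreover have "(B \<inter> {0..<l}) \<inter> (B \<inter> {l..<l+m}) = {}" by auto
  moreover have "finite (B \<inter> {0..<l})" "finite (B \<inter> {l..<l+m})" by auto
  ultimately show ?thesis using card_Un_disjoint[of "B \<inter> {0..<l}" "B \<inter> {l..<l+m}"] by simp
qed

lemma take_drop_app1: "take (length u) (drop 0 (u@v)) = u" by simp
lemma take_drop_app2: "take (length v) (drop (length u) (u@v)) = v" by simp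

lemma cover:
  "least (lang r) w \<Longrightarrow> B \<inter> {0..<length w} \<noteq> {} \<Longrightarrow>
   \<exists>\<tau>\<in>types r B. sat w \<tau> \<and> okc B 0 (length w) \<tau>"
proof (induction r arbitrary: w B)
  case Eps
  then have "w = []" by (auto simp: least_def)
  then show ?case using Eps by simp
next
  case (Star r)
  have "w = []" using least_star[OF Star.prems(1)] .
  then show ?case using Star by simp
next
  case (Lit a)
  then have w: "w = [a]" by (auto simp: least_def)
  then have "0 \<in> B" using Lit.prems(2) by auto
  moreover have "cB B 0 1 \<le> 1"
  proof -
    have "B \<inter> {0..<0+1} \<subseteq> {0}" by auto
    then have "card (B \<inter> {0..<0+1}) \<le> card {0::nat}" by (intro card_mono) auto
    then show ?thesis by (simp add: cB_def)
  qed
  ultimately show ?case using w by simp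
next
  case (Plus r s)
  from least_plus[OF Plus.prems(1)] show ?case
  proof
    assume "least (lang r) w"
    then obtain \<tau> where "\<tau>\<in>types r B" "sat w \<tau> \<and> okc B 0 (length w) \<tau>" using Plus.IH(1) Plus.prems(2) by blast
    then show ?case by auto
  next
    assume "least (lang s) w"
    then obtain \<tau> where "\<tau>\<in>types s B" "sat w \<tau> \<and> okc B 0 (length w) \<tau>" using Plus.IH(2) Plus.prems(2) by blast
    then show ?case by auto
  qed
next
  case (Times r s)
  obtain u v where w: "w = u@v" and u: "least (lang r) u" and v: "least (lang s) v"
    using least_times[OF Times.prems(1)] by blast
  have lr: "len r = length u" "cnt r = occ u True" using len_cnt[OF u] by auto
  have ls: "len s = length v" "cnt s = occ v True" using len_cnt[OF v] by auto
  have sp: "card (B \<inter> {0..<length u + length v}) = card (B \<inter> {0..<length u}) + card (B \<inter> {length u..<length u + length v})"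
    by (rule card_split)
  have ne: "card (B \<inter> {0..<length u + length v}) > 0"
    using Times.prems(2) w by (simp add: card_gt_0_iff)
  show ?case
  proof (cases "card (B \<inter> {length u..<length u + length v}) \<le> card (B \<inter> {0..<length u})")
    case True
    then have "card (B \<inter> {0..<length u}) > 0" using sp ne by linarith
    then have "B \<inter> {0..<length u} \<noteq> {}" by (metis card.empty less_irrefl)
    then obtain \<tau> where t: "\<tau> \<in> types r B" "sat u \<tau>" "okc B 0 (length u) \<tau>"
      using Times.IH(1)[OF u] by blast
    let ?t = "(0, len r, cnt r) # \<tau>"
    have "?t \<in> types (Times r s) B" using True t lr ls by simp
    moreover have "sat w ?t" using t(2) w lr by (simp add: sat_app_r)
    moreover have "okc B 0 (length w) ?t" using t(3) w lr True sp by (simp add: cB_def)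
    ultimately show ?thesis by blast
  next
    case False
    let ?B' = "shiftset (length u) B"
    have "card (?B' \<inter> {0..<length v}) = card (B \<inter> {length u..<length u + length v})"
      using cB_shift[of "length u" B 0 "length v"] unfolding cB_def by simp
    then have "card (?B' \<inter> {0..<length v}) > 0" using False by linarith
    then have "?B' \<inter> {0..<length v} \<noteq> {}" by (metis card.empty less_irrefl)
    then obtain \<tau> where t: "\<tau> \<in> types s ?B'" "sat v \<tau>" "okc ?B' 0 (length v) \<tau>"
      using Times.IH(2)[OF v] by blast
    let ?t = "(len r, len s, cnt s) # shift (len r) \<tau>"
    have "?t \<in> types (Times r s) B" using False t lr ls by simp
    moreover have "sat w ?t" using sat_shift[OF t(2), of u] w lr ls by simp
    moreover have "okc B 0 (length w) ?t"
      using okc_shift[OF t(3)] w lr ls False sp by (simp add: cB_def)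
    ultimately show ?thesis by blast
  qed
qed


definition Sol :: "nat set \<Rightarrow> nat \<Rightarrow> nat \<Rightarrow> nat \<Rightarrow> (nat \<times> nat \<times> nat) list \<Rightarrow> nat set set" where
  "Sol B A L C \<tau> = {S. S \<subseteq> B \<inter> {A..<A+L} \<and> card S = C \<and> (\<forall>(a,b,c)\<in>set \<tau>. card (S \<inter> {a..<a+b}) = c)}"

definition cards :: "nat set \<Rightarrow> (nat \<times> nat \<times> nat) list \<Rightarrow> nat list" where
  "cards B \<tau> = map (\<lambda>(a,b,c). cB B a b) \<tau>"

lemma okc_nested: "okc B A L \<tau> \<Longrightarrow> \<forall>(a,b,c)\<in>set \<tau>. A \<le> a \<and> a+b \<le> A+L"
  by (induction B A L \<tau> rule: okc.induct) fastforce+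

lemma cB_mono: "A \<le> a \<Longrightarrow> a+b \<le> A+L \<Longrightarrow> cB B a b \<le> cB B A L"
  unfolding cB_def by (intro card_mono) auto

lemma okc_cok: "okc B A L \<tau> \<Longrightarrow> cok (cB B A L) (cards B \<tau>)"
  by (induction B A L \<tau> rule: okc.induct) (auto simp: cards_def cB_mono)

lemma choose_le1: "(n::nat) \<le> 1 \<Longrightarrow> n choose C \<le> 1"
proof -
  assume "n \<le> 1"
  then consider "n = 0" | "n = 1" by linarith
  then show ?thesis
  proof cases
    case 1 then show ?thesis by (cases C) auto
  next
    case 2
    show ?thesis
    proof (cases "C \<le> 1")
      case True then consider "C = 0" | "C = 1" by linarith
      then show ?thesis using 2 by cases auto
    next
      case False then show ?thesis using 2 by (simp add: binomial_eq_0)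
    qed
  qed
qed

lemma count: "okc B A L \<tau> \<Longrightarrow> card (Sol B A L C \<tau>) \<le> pm (cB B A L) (cards B \<tau>)"
proof (induction \<tau> arbitrary: A L C)
  case Nil
  let ?J = "B \<inter> {A..<A+L}"
  have "Sol B A L C [] \<subseteq> {S. S \<subseteq> ?J \<and> card S = C}" by (auto simp: Sol_def)
  then have "card (Sol B A L C []) \<le> card {S. S \<subseteq> ?J \<and> card S = C}"
    by (intro card_mono) auto
  also have "\<dots> = card ?J choose C" by (intro n_subsets) auto
  also have "\<dots> \<le> 1"
  proof -
    have "card ?J \<le> 1" using Nil by (simp add: cB_def)
    then show ?thesis by (rule choose_le1)
  qed
  finally show ?case by (simp add: cards_def)
next
  case (Cons t \<tau>)
  obtain a b c where t: "t = (a,b,c)" by (cases t) auto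
  let ?J = "B \<inter> {A..<A+L}"
  let ?J1 = "B \<inter> {a..<a+b}"
  have pr: "A \<le> a" "a+b \<le> A+L" "okc B a b \<tau>" using Cons.prems t by auto
  have sub: "?J1 \<subseteq> ?J" using pr by auto
  have nest: "\<forall>(a',b',c')\<in>set \<tau>. a \<le> a' \<and> a'+b' \<le> a+b" using okc_nested[OF pr(3)] .
  let ?f = "\<lambda>S. (S - ?J1, S \<inter> ?J1)"
  have inj: "inj_on ?f (Sol B A L C (t#\<tau>))"
    by (rule inj_onI) (metis Diff_partition Int_Diff_Un Un_commute prod.inject)
  have img: "?f ` Sol B A L C (t#\<tau>) \<subseteq> {X. X \<subseteq> ?J - ?J1 \<and> card X = C - c} \<times> Sol B a b c \<tau>"
  proof
    fix p assume "p \<in> ?f ` Sol B A L C (t#\<tau>)"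
    then obtain S where p: "p = ?f S" and S: "S \<in> Sol B A L C (t#\<tau>)" by blast
    have SJ: "S \<subseteq> ?J" and cS: "card S = C" and c1: "card (S \<inter> {a..<a+b}) = c"
      and cr: "\<forall>(a',b',c')\<in>set \<tau>. card (S \<inter> {a'..<a'+b'}) = c'"
      using S t by (auto simp: Sol_def)
    have fin: "finite S" using SJ finite_subset by blast
    have e1: "S \<inter> ?J1 = S \<inter> {a..<a+b}" using SJ by auto
    have "card S = card (S - ?J1) + card (S \<inter> ?J1)"
      using fin by (metis Int_Diff_Un Int_Diff_disjoint card_Un_disjoint finite_Diff finite_Int Un_commute inf_commute)
    then have cd: "card (S - ?J1) = C - c" using cS c1 e1 by simp
    have "\<forall>(a',b',c')\<in>set \<tau>. card ((S \<inter> ?J1) \<inter> {a'..<a'+b'}) = c'"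
    proof (intro ballI, clarify)
      fix a' b' c' assume m: "(a',b',c') \<in> set \<tau>"
      then have "(S \<inter> ?J1) \<inter> {a'..<a'+b'} = S \<inter> {a'..<a'+b'}" using nest SJ by fastforce
      then show "card ((S \<inter> ?J1) \<inter> {a'..<a'+b'}) = c'" using cr m by fastforce
    qed
    then have "S \<inter> ?J1 \<in> Sol B a b c \<tau>" using c1 e1 by (auto simp: Sol_def)
    moreover have "S - ?J1 \<subseteq> ?J - ?J1" using SJ by auto
    ultimately show "p \<in> {X. X \<subseteq> ?J - ?J1 \<and> card X = C - c} \<times> Sol B a b c \<tau>"
      using p cd by auto
  qed
  have finJ: "finite (?J - ?J1)" by auto
  have "card (Sol B A L C (t#\<tau>)) \<le> card ({X. X \<subseteq> ?J - ?J1 \<and> card X = C - c} \<times> Sol B a b c \<tau>)"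
  proof (rule card_inj_on_le[OF inj img])
    have "finite (Sol B a b c \<tau>)" unfolding Sol_def by (rule finite_subset[of _ "Pow (B \<inter> {a..<a+b})"]) auto
    then show "finite ({X. X \<subseteq> ?J - ?J1 \<and> card X = C - c} \<times> Sol B a b c \<tau>)" using finJ by auto
  qed
  also have "\<dots> = (card (?J - ?J1) choose (C - c)) * card (Sol B a b c \<tau>)"
    using n_subsets[OF finJ] by (simp add: card_cartesian_product)
  also have "\<dots> \<le> mb (cB B A L - cB B a b) * pm (cB B a b) (cards B \<tau>)"
  proof (intro mult_le_mono)
    have "card (?J - ?J1) = cB B A L - cB B a b"
      using sub by (simp add: cB_def card_Diff_subset)
    then show "card (?J - ?J1) choose (C - c) \<le> mb (cB B A L - cB B a b)" using mb_ge by simp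
    show "card (Sol B a b c \<tau>) \<le> pm (cB B a b) (cards B \<tau>)" using Cons.IH[OF pr(3)] .
  qed
  also have "\<dots> = pm (cB B A L) (cards B (t#\<tau>))" using t by (simp add: cards_def)
  finally show ?case .
qed


definition wd :: "nat \<Rightarrow> nat set \<Rightarrow> bool list" where
  "wd n S = map (\<lambda>i. i \<in> S) [0..<n]"

lemma occ_map_upt: "occ (map (\<lambda>i. i \<in> S) [a..<b]) True = card (S \<inter> {a..<b})"
proof -
  have "occ (map (\<lambda>i. i \<in> S) [a..<b]) True = length (filter (\<lambda>i. i \<in> S) [a..<b])"
    by (simp add: occ_def filter_map o_def)
  also have "\<dots> = card (set (filter (\<lambda>i. i \<in> S) [a..<b]))"
    by (metis distinct_card distinct_filter distinct_upt)
  also have "set (filter (\<lambda>i. i \<in> S) [a..<b]) = S \<inter> {a..<b}" by auto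
  finally show ?thesis .
qed

lemma sat_wd: "sat (wd n S) \<tau> \<Longrightarrow> \<forall>(a,b,c)\<in>set \<tau>. card (S \<inter> {a..<a+b}) = c"
proof (induction \<tau>)
  case Nil then show ?case by simp
next
  case (Cons t \<tau>)
  obtain a b c where t: "t = (a,b,c)" by (cases t) auto
  have "a + b \<le> n" "occ (take b (drop a (wd n S))) True = c" "sat (wd n S) \<tau>"
    using Cons.prems t by (auto simp: wd_def)
  moreover have "take b (drop a (wd n S)) = map (\<lambda>i. i \<in> S) [a..<a+b]"
    using \<open>a+b \<le> n\<close> by (simp add: wd_def drop_map take_map)
  ultimately show ?case using Cons.IH t occ_map_upt[of S a "a+b"] by auto
qed

lemma least_wd:
  assumes "S \<subseteq> {0..<n}" "card S = k"
  shows "least (Bstar n k) (wd n S)"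
proof -
  have l: "length (wd n S) = n" by (simp add: wd_def)
  have t: "occ (wd n S) True = k" using occ_map_upt[of S 0 n] assms
    by (simp add: wd_def Int_absorb2)
  have f: "occ (wd n S) False = n - k" using len_occ[of "wd n S"] l t by simp
  show ?thesis unfolding least_def Bstar_def using t f by auto
qed

lemma block:
  assumes L: "lang r = Bstar n k" and B: "B \<subseteq> {0..<n}" "card B = 2*k" and k: "1 \<le> k"
    and X: "8 \<le> X" and mX: "8^m * X \<le> 2*k"
  shows "X^m \<le> (2*k*card (types r B))^2"
proof -
  have finB: "finite B" using B finite_subset by blast
  define Tg where "Tg = {\<tau>\<in>types r B. okc B 0 n \<tau>}"
  have finT: "finite Tg" unfolding Tg_def using finite_types by auto
  define Sset where "Sset = {S. S \<subseteq> B \<and> card S = k}"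
  have cB0: "cB B 0 n = 2*k" using B by (simp add: cB_def Int_absorb2)
  have cov: "Sset \<subseteq> (\<Union>\<tau>\<in>Tg. Sol B 0 n k \<tau>)"
  proof
    fix S assume "S \<in> Sset"
    then have S: "S \<subseteq> B" "card S = k" by (auto simp: Sset_def)
    have lw: "least (lang r) (wd n S)" using least_wd[of S n k] S B L by auto
    have "B \<inter> {0..<length (wd n S)} \<noteq> {}" using B k by (auto simp: wd_def Int_absorb2)
    then obtain \<tau> where t: "\<tau> \<in> types r B" "sat (wd n S) \<tau>" "okc B 0 n \<tau>"
      using cover[OF lw] by (auto simp: wd_def)
    have "S \<in> Sol B 0 n k \<tau>" using S B sat_wd[OF t(2)] unfolding Sol_def by auto
    then show "S \<in> (\<Union>\<tau>\<in>Tg. Sol B 0 n k \<tau>)" using t Tg_def by auto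
  qed
  have cS: "card Sset = (2*k) choose k" unfolding Sset_def using n_subsets[OF finB] B by simp
  obtain S0 where "S0 \<subseteq> B" "card S0 = k" using obtain_subset_with_card_n[of k B] B by auto
  then have "Sset \<noteq> {}" unfolding Sset_def by auto
  then have TgNE: "Tg \<noteq> {}" using cov by auto
  define f where "f \<tau> = pm (2*k) (cards B \<tau>)" for \<tau>
  define Q where "Q = Max (f ` Tg)"
  have Qge: "f \<tau> \<le> Q" if "\<tau> \<in> Tg" for \<tau> unfolding Q_def using finT that by auto
  have Qin: "Q \<in> f ` Tg" unfolding Q_def using finT TgNE by (intro Max_in) auto
  have seg_ok: "(f \<tau>)^2 * X^m \<le> 16^k" if "\<tau> \<in> Tg" for \<tau>
  proof -
    have "okc B 0 n \<tau>" using that Tg_def by auto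
    then have "cok (2*k) (cards B \<tau>)" using okc_cok cB0 by metis
    then have "(mb (2*k - 2*k) * pm (2*k) (cards B \<tau>))^2 * X^m \<le> 4^(2*k)"
      using seg[of "2*k" "cards B \<tau>" "2*k" X m] X mX k by auto
    then show ?thesis by (simp add: f_def power_mult)
  qed
  have QX: "Q^2 * X^m \<le> 16^k" using Qin seg_ok by auto
  have finSol: "finite (Sol B 0 n k \<tau>)" for \<tau>
    unfolding Sol_def by (rule finite_subset[of _ "Pow (B \<inter> {0..<0+n})"]) (auto simp: finB)
  have "(2*k) choose k \<le> card (\<Union>\<tau>\<in>Tg. Sol B 0 n k \<tau>)"
    unfolding cS[symmetric] using cov finT finSol by (intro card_mono) auto
  also have "\<dots> \<le> (\<Sum>\<tau>\<in>Tg. card (Sol B 0 n k \<tau>))" using finT by (rule card_UN_le)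
  also have "\<dots> \<le> (\<Sum>\<tau>\<in>Tg. Q)"
  proof (intro sum_mono)
    fix \<tau> assume "\<tau> \<in> Tg"
    then have "card (Sol B 0 n k \<tau>) \<le> f \<tau>" using count[of B 0 n \<tau> k] cB0 Tg_def f_def by auto
    then show "card (Sol B 0 n k \<tau>) \<le> Q" using Qge[OF \<open>\<tau> \<in> Tg\<close>] by linarith
  qed
  also have "\<dots> = card Tg * Q" by simp
  also have "\<dots> \<le> card (types r B) * Q"
    using finite_types by (intro mult_le_mono1 card_mono) (auto simp: Tg_def)
  finally have bT: "(2*k) choose k \<le> card (types r B) * Q" .
  have "real (4^k) / (2 * real k) \<le> real ((2*k) choose k)"
    using central_binomial_lower_bound[of k] k by simp
  then have "real (4^k) \<le> real ((2*k) choose k) * (2 * real k)" using k by (simp add: field_simps)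
  then have "real (4^k) \<le> real (((2*k) choose k) * (2*k))" by simp
  then have c4: "4^k \<le> ((2*k) choose k) * (2*k)" by (simp only: of_nat_le_iff)
  have "(16::nat)^k = (4^k)^2"
  proof -
    have "(4::nat)^k * 4^k = (4*4)^k" by (simp only: power_mult_distrib)
    then show ?thesis unfolding power2_eq_square by simp
  qed
  then have "16^k * X^m = (4^k)^2 * X^m" by simp
  also have "\<dots> \<le> (((2*k) choose k) * (2*k))^2 * X^m" using c4 by (intro mult_le_mono1 power_mono) auto
  also have "\<dots> \<le> (card (types r B) * Q * (2*k))^2 * X^m" using bT by (intro mult_le_mono1 power_mono) auto
  also have "\<dots> = (2*k*card (types r B))^2 * (Q^2 * X^m)" by (simp add: power_mult_distrib algebra_simps)
  also have "\<dots> \<le> (2*k*card (types r B))^2 * 16^k" using QX by (intro mult_le_mono2)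
  finally have "16^k * X^m \<le> 16^k * (2*k*card (types r B))^2" by (simp add: mult.commute)
  then show ?thesis by simp
qed


lemma singles:
  assumes L: "lang r = Bstar n k" and k: "k \<le> n"
  shows "2*n \<le> rsize r + 1"
proof -
  have lw: "least (lang r) (wd n {0..<k})" using least_wd[of "{0..<k}" n k] L k by auto
  have ne: "card (types r {j}) \<ge> 1" if "j < n" for j
  proof -
    have "{j} \<inter> {0..<length (wd n {0..<k})} \<noteq> {}" using that by (simp add: wd_def)
    then obtain \<tau> where "\<tau> \<in> types r {j}" using cover[OF lw] by blast
    then have "types r {j} \<noteq> {}" by auto
    then show ?thesis using finite_types[of r "{j}"] by (simp add: Suc_le_eq card_gt_0_iff)
  qed
  have "n = (\<Sum>j\<in>{0..<n}. 1)" by simp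
  also have "\<dots> \<le> (\<Sum>j\<in>{0..<n}. card (types r {j}))" using ne by (intro sum_mono) auto
  finally have "n \<le> (\<Sum>j\<in>{0..<n}. card (types r {j}))" .
  moreover have "2 * (\<Sum>j\<in>{0..<n}. card (types r {j})) \<le> rsize r + 1"
    using types_sum[of "{0..<n}" "\<lambda>j. {j}" r] by auto
  ultimately show ?thesis by linarith
qed

lemma blocks:
  assumes L: "lang r = Bstar n k" and k: "1 \<le> k" "2*k \<le> n"
    and X: "8 \<le> X" and mX: "8^m * X \<le> 2*k"
  shows "real (n div (2*k)) * sqrt (real (X^m)) \<le> real k * (real (rsize r) + 1)"
proof -
  define q where "q = n div (2*k)"
  define Bf where "Bf j = {2*k*j..<2*k*j+2*k}" for j
  have disj: "\<forall>i\<in>{0..<q}. \<forall>j\<in>{0..<q}. i \<noteq> j \<longrightarrow> Bf i \<inter> Bf j = {}"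
  proof (intro ballI impI)
    fix i j :: nat assume "i \<in> {0..<q}" "j \<in> {0..<q}" "i \<noteq> j"
    show "Bf i \<inter> Bf j = {}"
    proof (rule ccontr)
      assume "Bf i \<inter> Bf j \<noteq> {}"
      then obtain x where x: "x \<in> Bf i" "x \<in> Bf j" by blast
      have "x div (2*k) = i" using x(1) by (intro div_nat_eqI) (auto simp: Bf_def)
      moreover have "x div (2*k) = j" using x(2) by (intro div_nat_eqI) (auto simp: Bf_def)
      ultimately show False using \<open>i \<noteq> j\<close> by simp
    qed
  qed
  have each: "sqrt (real (X^m)) \<le> 2 * real k * real (card (types r (Bf j)))" if "j < q" for j
  proof -
    have "2*k*j + 2*k = 2*k*(j+1)" by simp
    also have "\<dots> \<le> 2*k*q" using that by (intro mult_le_mono2) simp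
    also have "\<dots> \<le> n" unfolding q_def by (metis div_times_less_eq_dividend mult.commute)
    finally have "Bf j \<subseteq> {0..<n}" by (auto simp: Bf_def)
    moreover have "card (Bf j) = 2*k" by (simp add: Bf_def)
    ultimately have "X^m \<le> (2*k*card (types r (Bf j)))^2" using block[OF L _ _ k(1) X mX] by blast
    then have "real (X^m) \<le> real ((2*k*card (types r (Bf j)))^2)" by (simp only: of_nat_le_iff)
    then have "real (X^m) \<le> (real (2*k*card (types r (Bf j))))^2" by (simp only: of_nat_power)
    then have "sqrt (real (X^m)) \<le> sqrt ((real (2*k*card (types r (Bf j))))^2)"
      by (rule real_sqrt_le_mono)
    then have "sqrt (real (X^m)) \<le> real (2*k*card (types r (Bf j)))" by simp
    then show ?thesis by simp
  qed
  have "real q * sqrt (real (X^m)) = (\<Sum>j\<in>{0..<q}. sqrt (real (X^m)))" by simp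
  also have "\<dots> \<le> (\<Sum>j\<in>{0..<q}. 2 * real k * real (card (types r (Bf j))))"
    using each by (intro sum_mono) auto
  also have "\<dots> = real k * real (2 * (\<Sum>j\<in>{0..<q}. card (types r (Bf j))))"
    by (simp add: sum_distrib_left algebra_simps)
  also have "\<dots> \<le> real k * (real (rsize r) + 1)"
  proof -
    have "2 * (\<Sum>j\<in>{0..<q}. card (types r (Bf j))) \<le> rsize r + 1"
      using types_sum[of "{0..<q}" Bf r] disj by auto
    then have "real (2 * (\<Sum>j\<in>{0..<q}. card (types r (Bf j)))) \<le> real (rsize r) + 1"
      by (metis of_nat_Suc of_nat_le_iff Suc_eq_plus1 add.commute)
    then show ?thesis by (intro mult_left_mono) auto
  qed
  finally show ?thesis unfolding q_def .
qed


lemma poly_ineq: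
  fixes M :: real assumes "10 \<le> M"
  shows "12*M + 13 + (6*M+5)^2/7200 \<le> 3/2*M^2"
proof -
  have "(6*M+5)^2 \<le> (7*M)^2" using assms by (intro power_mono) auto
  then have a: "(6*M+5)^2/7200 \<le> 49*M^2/7200" by (simp add: power_mult_distrib)
  have "M*M \<ge> 10*M" using assms by (intro mult_right_mono) auto
  then have "3/2*M^2 - 49*M^2/7200 - 12*M - 13 \<ge> (3/2 - 49/7200)*(10*M) - 12*M - 13"
    by (simp add: power2_eq_square algebra_simps)
  moreover have "(3/2 - 49/7200)*(10*M) - 12*M - 13 \<ge> 0" using assms by simp
  ultimately show ?thesis using a by linarith
qed

lemma final_real:
  fixes n k R :: nat
  assumes k: "1 \<le> k" "2*k \<le> n"
    and h1: "2*n \<le> R + 1"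
    and h2: "\<And>m X. 8 \<le> X \<Longrightarrow> 8^m*X \<le> 2*k \<Longrightarrow>
              real (n div (2*k)) * sqrt (real (X^m)) \<le> real k * (real R + 1)"
  shows "real n * real k powr (1/7200 * log 2 (real k)) \<le> real R"
proof -
  define t where "t = log 2 (real k)"
  define c :: real where "c = 1/7200"
  have kpos: "0 < real k" using k by simp
  have t0: "0 \<le> t" unfolding t_def using k by simp
  have kt: "real k = 2 powr t" unfolding t_def using kpos by simp
  have kp: "real k powr (c * t) = 2 powr (c * t^2)"
    by (simp add: kt powr_powr power2_eq_square algebra_simps)
  have n2: "2 \<le> n" using k by simp
  have p1: "1 \<le> 2 powr (c * t^2)" using t0 by (intro ge_one_powr_ge_zero) (auto simp: c_def)
  show ?thesis
  proof (cases "2*k < 64^10")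
    case True
    then have "real k < 2 powr 59" by simp
    then have "t < 59" unfolding t_def using kpos by (simp add: log_less_iff)
    then have "t^2 \<le> 59^2" using t0 by (intro power_mono) auto
    then have "c * t^2 \<le> 1/2" by (simp add: c_def)
    then have "2 powr (c * t^2) \<le> 2 powr (1/2)" by simp
    also have "\<dots> = sqrt 2" by (simp add: powr_half_sqrt)
    also have "\<dots> \<le> sqrt ((3/2)^2)" by (rule real_sqrt_le_mono) (simp add: power2_eq_square)
    also have "\<dots> = 3/2" by simp
    finally have "2 powr (c * t^2) \<le> 3/2" .
    then have "real n * 2 powr (c * t^2) \<le> real n * (3/2)" by (intro mult_left_mono) auto
    also have "\<dots> \<le> real R" using h1 n2 by linarith
    finally show ?thesis using kp by (simp add: t_def c_def)
  next
    case False
    obtain m where m: "64^m \<le> 2*k" "2*k < 64^(m+1)" using ex_power_ivl1[of 64 "2*k"] k by auto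
    have m10: "10 \<le> m"
    proof (rule ccontr)
      assume "\<not> 10 \<le> m"
      then have "(64::nat)^(m+1) \<le> 64^10" by (intro power_increasing) auto
      then show False using m False by linarith
    qed
    define X :: nat where "X = 8^m"
    have "(8::nat)^1 \<le> 8^m" by (rule power_increasing) (use m10 in auto)
    then have X8: "8 \<le> X" unfolding X_def by simp
    have "8^m * X = 64^m" unfolding X_def by (simp flip: power_mult_distrib)
    then have mX: "8^m * X \<le> 2*k" using m by simp
    define q where "q = n div (2*k)"
    have hq: "real q * sqrt (real (X^m)) \<le> real k * (real R + 1)" using h2[OF X8 mX] q_def by simp
    have sq: "sqrt (real (X^m)) = 2 powr (3/2 * real m^2)"
    proof -
      have e8: "(8::real) = 2 powr 3" by simp
      have "real (X^m) = 8 powr (real m * real m)"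
        unfolding X_def by (simp add: powr_realpow[symmetric] power2_eq_square powr_powr flip: power_mult powr_realpow)
      also have "\<dots> = 2 powr (3 * real m^2)"
      proof -
        have "(2::real) powr (3 * (real m * real m)) = (2 powr 3) powr (real m * real m)"
          by (simp only: powr_powr)
        also have "\<dots> = 8 powr (real m * real m)" by simp
        finally show ?thesis by (simp add: power2_eq_square)
      qed
      finally have "real (X^m) = 2 powr (3 * real m^2)" .
      then have "sqrt (real (X^m)) = (2 powr (3 * real m^2)) powr (1/2)"
        by (simp add: powr_half_sqrt)
      then show ?thesis by (simp add: powr_powr)
    qed
    have q1: "1 \<le> q" unfolding q_def using k
      by (metis div_le_mono div_self mult_eq_0_iff not_one_le_zero zero_neq_numeral)
    have "n = q * (2*k) + n mod (2*k)" unfolding q_def by (rule div_mult_mod_eq[symmetric])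
    moreover have "n mod (2*k) < 2*k" using k by simp
    ultimately have "n < q*(2*k) + 2*k" by linarith
    also have "\<dots> \<le> 4*k*q" using q1 by (simp add: algebra_simps)
    finally have "n \<le> 4*k*q" by simp
    then have "real n \<le> real (4*k*q)" by (simp only: of_nat_le_iff)
    then have nq: "real n \<le> 4 * real k * real q" by simp
    let ?P = "2 powr (3/2 * real m^2)"
    have "real n * ?P \<le> 4 * real k * real q * ?P" using nq by (intro mult_right_mono) auto
    also have "\<dots> = 4 * real k * (real q * sqrt (real (X^m)))" using sq by simp
    also have "\<dots> \<le> 4 * real k * (real k * (real R + 1))" using hq kpos by (intro mult_left_mono) auto
    finally have A: "real n * ?P \<le> 4 * (real k)^2 * (real R + 1)" by (simp add: power2_eq_square algebra_simps)
    have "real (2*k) < real (64^(m+1))" using m(2) by (simp only: of_nat_less_iff)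
    moreover have "real (64^(m+1)) = 2 powr (6 * real (m+1))"
    proof -
      have "(2::real)^(6*(m+1)) = (2^6)^(m+1)" by (simp only: power_mult)
      then have "real (64^(m+1)) = (2::real)^(6*(m+1))" by simp
      also have "\<dots> = 2 powr (real (6*(m+1)))" by (rule powr_realpow[symmetric]) simp
      finally show ?thesis by simp
    qed
    ultimately have "2 * real k < 2 powr (6 * real (m+1))" by simp
    also have "\<dots> = 2 powr 1 * 2 powr (6 * real m + 5)"
      by (simp only: powr_add[symmetric]) (simp add: algebra_simps)
    also have "\<dots> = 2 * 2 powr (6 * real m + 5)" by simp
    finally have "real k < 2 powr (6 * real m + 5)" by simp
    then have tl: "t < 6 * real m + 5" unfolding t_def using kpos by (simp add: log_less_iff)
    then have "t^2 \<le> (6 * real m + 5)^2" using t0 by (intro power_mono) auto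
    then have ct: "c * t^2 \<le> (6 * real m + 5)^2/7200" by (simp add: c_def)
    have "8 * (real k)^2 * 2 powr (c * t^2) = 2 powr (3 + 2*t + c*t^2)"
    proof -
      have a: "(2::real) powr (3 + 2*t + c*t^2) = 2 powr 3 * 2 powr (t + t) * 2 powr (c*t^2)"
        by (simp only: powr_add mult_2)
      have b: "(2::real) powr (t + t) = (real k)^2" by (simp only: powr_add kt power2_eq_square)
      show ?thesis using a b by simp
    qed
    also have "\<dots> \<le> 2 powr (12 * real m + 13 + (6 * real m + 5)^2/7200)"
      using tl ct by simp
    also have "\<dots> \<le> ?P" using poly_ineq[of "real m"] m10 by simp
    finally have B: "8 * (real k)^2 * 2 powr (c * t^2) \<le> ?P" .
    have "8 * (real k)^2 * (real n * 2 powr (c * t^2)) = real n * (8 * (real k)^2 * 2 powr (c * t^2))"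
      by simp
    also have "\<dots> \<le> real n * ?P" using B by (intro mult_left_mono) auto
    also have "\<dots> \<le> 4 * (real k)^2 * (real R + 1)" by (rule A)
    finally have "(real k)^2 * (8 * (real n * 2 powr (c * t^2))) \<le> (real k)^2 * (4 * (real R + 1))"
      by (simp add: algebra_simps)
    then have "8 * (real n * 2 powr (c * t^2)) \<le> 4 * (real R + 1)"
      using kpos by (simp add: mult_le_cancel_left)
    moreover have "1 \<le> real n * 2 powr (c * t^2)" using p1 n2
      by (metis mult_le_mono1 of_nat_1 of_nat_le_iff one_le_numeral order_trans mult_1 mult_mono zero_le_one)
    ultimately have "real n * 2 powr (c * t^2) \<le> real R"
      using of_nat_0_le_iff[of R] by (smt (verit))
    then show ?thesis using kp by (simp add: t_def c_def)
  qed
qed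


definition sig :: "bool rexp" where "sig = Star (Plus (Lit True) (Lit False))"

lemma lang_sig: "lang sig = UNIV"
proof -
  have "v \<in> kleene {[True],[False]}" for v :: "bool list"
  proof -
    have "v = concat (map (\<lambda>x. [x]) v)" by (induction v) auto
    moreover have "set (map (\<lambda>x. [x]) v) \<subseteq> {[True],[False]}" by auto
    ultimately show ?thesis unfolding kleene_def by blast
  qed
  then show ?thesis by (auto simp: sig_def insert_commute)
qed

fun up :: "nat \<Rightarrow> nat \<Rightarrow> bool rexp" where
  "up 0 0 = sig"
| "up (Suc i) 0 = Times sig (Times (Lit True) (up i 0))"
| "up 0 (Suc j) = Times sig (Times (Lit False) (up 0 j))"
| "up (Suc i) (Suc j) = Plus (Times (Lit True) (up i (Suc j))) (Times (Lit False) (up (Suc i) j))"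

lemma occ_ge1: "1 \<le> occ v a \<Longrightarrow> \<exists>ys zs. v = ys @ a # zs \<and> occ ys a = 0"
proof -
  assume "1 \<le> occ v a"
  then have "filter (\<lambda>x. x = a) v \<noteq> []" by (auto simp: occ_def)
  then have "a \<in> set v" by (auto simp: filter_empty_conv)
  then obtain ys zs where "v = ys @ a # zs" "a \<notin> set ys" using split_list_first by metis
  moreover have "occ ys a = 0" using \<open>a \<notin> set ys\<close> by (auto simp: occ_def filter_empty_conv)
  ultimately show ?thesis by blast
qed

lemma lang_up: "lang (up i j) = {v. i \<le> occ v True \<and> j \<le> occ v False}"
proof (induction i j rule: up.induct)
  case 1 then show ?case by (simp add: lang_sig)
next
  case (2 i)
  show ?case
  proof (intro set_eqI iffI)
    fix v assume "v \<in> lang (up (Suc i) 0)"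
    then show "v \<in> {v. Suc i \<le> occ v True \<and> 0 \<le> occ v False}" using 2 by (auto simp: conc_def)
  next
    fix v assume "v \<in> {v. Suc i \<le> occ v True \<and> 0 \<le> occ v False}"
    then obtain ys zs where v: "v = ys @ True # zs" "occ ys True = 0" using occ_ge1[of v True] by auto
    then have "i \<le> occ zs True" using \<open>v \<in> _\<close> by simp
    then have "zs \<in> lang (up i 0)" using 2 by simp
    then show "v \<in> lang (up (Suc i) 0)" using v lang_sig by (auto simp: conc_def)
  qed
next
  case (3 j)
  show ?case
  proof (intro set_eqI iffI)
    fix v assume "v \<in> lang (up 0 (Suc j))"
    then show "v \<in> {v. 0 \<le> occ v True \<and> Suc j \<le> occ v False}" using 3 by (auto simp: conc_def)
  next
    fix v assume "v \<in> {v. 0 \<le> occ v True \<and> Suc j \<le> occ v False}"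
    then obtain ys zs where v: "v = ys @ False # zs" "occ ys False = 0" using occ_ge1[of v False] by auto
    then have "j \<le> occ zs False" using \<open>v \<in> _\<close> by simp
    then have "zs \<in> lang (up 0 j)" using 3 by simp
    then show "v \<in> lang (up 0 (Suc j))" using v lang_sig by (auto simp: conc_def)
  qed
next
  case (4 i j)
  show ?case
  proof (intro set_eqI iffI)
    fix v assume "v \<in> lang (up (Suc i) (Suc j))"
    then show "v \<in> {v. Suc i \<le> occ v True \<and> Suc j \<le> occ v False}" using 4 by (auto simp: conc_def)
  next
    fix v assume h: "v \<in> {v. Suc i \<le> occ v True \<and> Suc j \<le> occ v False}"
    then obtain a v' where v: "v = a # v'" by (cases v) auto
    show "v \<in> lang (up (Suc i) (Suc j))"
    proof (cases a)
      case True
      then have "v' \<in> lang (up i (Suc j))" using h v 4 by auto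
      then show ?thesis using v True by (auto simp: conc_def)
    next
      case False
      then have "v' \<in> lang (up (Suc i) j)" using h v 4 by auto
      then show ?thesis using v False by (auto simp: conc_def)
    qed
  qed
qed

lemma rpn_witness: "\<exists>r. lang r = Bstar n k \<and> rsize r = rpn (Bstar n k)"
proof -
  have "lang (up k (n-k)) = Bstar n k" by (simp add: lang_up Bstar_def)
  then have ex: "\<exists>m r. lang r = Bstar n k \<and> rsize r = m" by blast
  show ?thesis unfolding rpn_def using LeastI_ex[OF ex] .
qed

theorem corollary8p5:
  shows "\<exists>c>0. \<forall>n k::nat. 1 \<le> k \<and> 2 * k \<le> n \<longrightarrow>
           real (rpn (Bstar n k)) \<ge> real n * real k powr (c * log 2 (real k))"
proof (intro exI[of _ "1/7200"] conjI allI impI)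
  fix n k :: nat assume nk: "1 \<le> k \<and> 2 * k \<le> n"
  obtain r where r: "lang r = Bstar n k" "rsize r = rpn (Bstar n k)" using rpn_witness by blast
  have h1: "2*n \<le> rsize r + 1" using singles[OF r(1)] nk by simp
  have h2: "real (n div (2*k)) * sqrt (real (X^m)) \<le> real k * (real (rsize r) + 1)"
    if "8 \<le> X" "8^m*X \<le> 2*k" for m X
    using blocks[OF r(1) _ _ that] nk by auto
  show "real n * real k powr (1/7200 * log 2 (real k)) \<le> real (rpn (Bstar n k))"
    using final_real[of k n "rsize r", OF _ _ h1 h2] nk r(2) by auto
qed (simp)


end
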